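(* Let $\varepsilon>0$ and let $G$ be a graph on $n$ vertices such that no subgraph of $G$ with at least $n/2$ vertices is an $\varepsilon$-expander (i.e. $G$ is $(n/2,\varepsilon)$-bounded). Then $G$ has a $(2\varepsilon n/3,\,2/3)$-separator.
   Context: For a graph $G'=(V',E')$ and $U\subseteq V'$, $N(U)$ is the set of vertices of $V'\setminus U$ adjacent in $G'$ to some vertex of $U$; $G'$ is an $\varepsilon$-expander if $|N(U)|\ge\varepsilon|U|$ for all $U\subseteq V'$ with $|U|\le|V'|/2$. For a real $s\ge0$ and $\tfrac12\le\alpha<1$, a set $S\subseteq V$ is an $(s,\alpha)$-separator of $G=(V,E)$ if there are $A,B\subseteq V$ with $V=A\,\dot\cup\,B\,\dot\cup\,S$, $|S|\le s$, $|A|,|B|\le\alpha|V|$, and no edge of $G$ between $A$ and $B$. *)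

theory Defs
  imports Main Complex_Main
begin

definition graph :: "'a set \<Rightarrow> ('a \<Rightarrow> 'a \<Rightarrow> bool) \<Rightarrow> bool" where
  "graph V E \<longleftrightarrow> finite V \<and> (\<forall>u v. E u v \<longrightarrow> u \<in> V \<and> v \<in> V)
     \<and> (\<forall>u v. E u v \<longrightarrow> E v u) \<and> (\<forall>u. \<not> E u u)"

definition subgraph :: "'a set \<Rightarrow> ('a \<Rightarrow> 'a \<Rightarrow> bool) \<Rightarrow> 'a set \<Rightarrow> ('a \<Rightarrow> 'a \<Rightarrow> bool) \<Rightarrow> bool" where
  "subgraph V' E' V E \<longleftrightarrow> graph V' E' \<and> V' \<subseteq> V \<and> (\<forall>u v. E' u v \<longrightarrow> E u v)"

definition nbhd :: "'a set \<Rightarrow> ('a \<Rightarrow> 'a \<Rightarrow> bool) \<Rightarrow> 'a set \<Rightarrow> 'a set" where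
  "nbhd V' E' U = {v \<in> V' - U. \<exists>u\<in>U. E' u v}"

definition expander :: "real \<Rightarrow> 'a set \<Rightarrow> ('a \<Rightarrow> 'a \<Rightarrow> bool) \<Rightarrow> bool" where
  "expander \<epsilon> V' E' \<longleftrightarrow>
     (\<forall>U. U \<subseteq> V' \<and> real (card U) \<le> real (card V') / 2 \<longrightarrow>
        real (card (nbhd V' E' U)) \<ge> \<epsilon> * real (card U))"

definition separator :: "real \<Rightarrow> real \<Rightarrow> 'a set \<Rightarrow> ('a \<Rightarrow> 'a \<Rightarrow> bool) \<Rightarrow> 'a set \<Rightarrow> bool" where
  "separator s \<alpha> V E S \<longleftrightarrow>
     (\<exists>A B. V = A \<union> B \<union> S \<and> A \<inter> B = {} \<and> A \<inter> S = {} \<and> B \<inter> S = {}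
        \<and> real (card S) \<le> s
        \<and> real (card A) \<le> \<alpha> * real (card V) \<and> real (card B) \<le> \<alpha> * real (card V)
        \<and> (\<forall>a\<in>A. \<forall>b\<in>B. \<not> E a b))"

end

theory Submission
  imports Defs
begin

lemma sep_from:
  assumes "graph V E" "A \<subseteq> V" "S \<subseteq> V" "A \<inter> S = {}"
    and "\<forall>a\<in>A. \<forall>b\<in>V-(A\<union>S). \<not> E a b"
    and "real (card A) \<le> 2/3 * real (card V)"
    and "real (card (V-(A\<union>S))) \<le> 2/3 * real (card V)"
    and "real (card S) \<le> s"
  shows "separator s (2/3) V E S"
  unfolding separator_def
  apply (rule exI[of _ A], rule exI[of _ "V-(A\<union>S)"])
  using assms by auto

lemma main:
  fixes V :: "'a set" and E :: "'a \<Rightarrow> 'a \<Rightarrow> bool" and \<epsilon> :: real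
  assumes eps: "\<epsilon> > 0"
    and G: "graph V E"
    and H: "\<And>V' E'. subgraph V' E' V E \<Longrightarrow> real (card V') \<ge> real (card V) / 2
           \<Longrightarrow> \<not> expander \<epsilon> V' E'"
  shows "A \<subseteq> V \<Longrightarrow> S \<subseteq> V \<Longrightarrow> A \<inter> S = {} \<Longrightarrow> (\<forall>a\<in>A. \<forall>b\<in>V-(A\<union>S). \<not> E a b)
    \<Longrightarrow> real (card S) \<le> \<epsilon> * real (card A) \<Longrightarrow> real (card A) < real (card V) / 3
    \<Longrightarrow> \<exists>S. separator (2 * \<epsilon> * real (card V) / 3) (2/3) V E S"
proof (induction "card (V - A)" arbitrary: A S rule: less_induct)
  case less
  have finV: "finite V" using G unfolding graph_def by auto
  define W where "W = V - (A \<union> S)"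
  have finA: "finite A" "finite S" "finite W" using finV less.prems W_def
    by (auto intro: finite_subset)
  have cardW: "card W + card A + card S = card V"
  proof -
    have "V = W \<union> A \<union> S" using less.prems W_def by auto
    moreover have "card (W \<union> A \<union> S) = card W + card A + card S"
    proof -
      have "card (W \<union> A \<union> S) = card (W \<union> A) + card S"
        using finA less.prems(3) W_def by (intro card_Un_disjoint) auto
      moreover have "card (W \<union> A) = card W + card A"
        using finA W_def by (intro card_Un_disjoint) auto
      ultimately show ?thesis by simp
    qed
    ultimately show ?thesis by simp
  qed
  show ?case
  proof (cases "real (card W) < real (card V) / 2")
    case True
    have "\<epsilon> * real (card A) \<le> \<epsilon> * (real (card V) / 3)"
      using eps less.prems(6) by (intro mult_left_mono) auto
    moreover have "0 \<le> \<epsilon> * real (card V)" using eps by simp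
    ultimately have Sb: "real (card S) \<le> 2 * \<epsilon> * real (card V) / 3"
      using less.prems(5) by argo
    have "separator (2 * \<epsilon> * real (card V) / 3) (2/3) V E S"
    proof (rule sep_from[OF G less.prems(1-4) _ _ Sb])
      show "real (card A) \<le> 2 / 3 * real (card V)" using less.prems(6) by simp
      show "real (card (V - (A \<union> S))) \<le> 2 / 3 * real (card V)"
        using True W_def by simp
    qed
    then show ?thesis by blast
  next
    case False
    define E' where "E' = (\<lambda>u v. E u v \<and> u \<in> W \<and> v \<in> W)"
    have sub: "subgraph W E' V E"
      using G unfolding subgraph_def graph_def E'_def W_def by auto
    have "\<not> expander \<epsilon> W E'" using H[OF sub] False by simp
    then obtain U where U: "U \<subseteq> W" "real (card U) \<le> real (card W) / 2"
      and NU: "real (card (nbhd W E' U)) < \<epsilon> * real (card U)"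
      unfolding expander_def by force
    define N where "N = nbhd W E' U"
    have N: "N \<subseteq> W - U" "\<forall>v\<in>W-U. (\<exists>u\<in>U. E u v) \<longrightarrow> v \<in> N"
      unfolding N_def nbhd_def E'_def using U by auto
    have Une: "U \<noteq> {}" using NU by auto
    define A' where "A' = A \<union> U"
    define S' where "S' = S \<union> N"
    have finU: "finite U" "finite N" using U N finA by (auto intro: finite_subset)
    have cA': "card A' = card A + card U"
      unfolding A'_def using finA finU U W_def by (subst card_Un_disjoint) auto
    have cS': "card S' \<le> card S + card N"
      unfolding S'_def by (rule card_Un_le)
    have P1: "A' \<subseteq> V" "S' \<subseteq> V" "A' \<inter> S' = {}"
      using less.prems U N W_def unfolding A'_def S'_def by auto
    have P2: "\<forall>a\<in>A'. \<forall>b\<in>V-(A'\<union>S'). \<not> E a b"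
      using less.prems(4) N(2) W_def unfolding A'_def S'_def by auto
    have P3: "real (card S') \<le> \<epsilon> * real (card A')"
      using cS' cA' less.prems(5) NU N_def by (simp add: distrib_left)
    have bA': "real (card A') \<le> 2/3 * real (card V)"
      using cA' U(2) cardW less.prems(6) by simp
    show ?thesis
    proof (cases "real (card A') < real (card V) / 3")
      case True
      have lt: "card (V - A') < card (V - A)"
        unfolding A'_def using finV Une U W_def
        by (intro psubset_card_mono) auto
      show ?thesis by (rule less.hyps[OF lt P1 P2 P3 True])
    next
      case F2: False
      have cB: "card (V - (A' \<union> S')) + card A' \<le> card V"
      proof -
        have "card (V - (A' \<union> S')) + card A' = card ((V - (A' \<union> S')) \<union> A')"
          using finV P1 by (subst card_Un_disjoint) (auto intro: finite_subset)
        also have "\<dots> \<le> card V" using finV P1 by (intro card_mono) auto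
        finally show ?thesis .
      qed
      have "separator (2 * \<epsilon> * real (card V) / 3) (2/3) V E S'"
      proof (rule sep_from[OF G P1 P2 bA'])
        show "real (card (V - (A' \<union> S'))) \<le> 2 / 3 * real (card V)"
          using cB F2 by linarith
        show "real (card S') \<le> 2 * \<epsilon> * real (card V) / 3"
        proof -
          have "\<epsilon> * real (card A') \<le> \<epsilon> * (2/3 * real (card V))"
            using bA' eps by (intro mult_left_mono) auto
          then show ?thesis using P3 by argo
        qed
      qed
      then show ?thesis by blast
    qed
  qed
qed

theorem lemma11:
  fixes V :: "'a set" and E :: "'a \<Rightarrow> 'a \<Rightarrow> bool" and \<epsilon> :: real
  assumes "\<epsilon> > 0"
    and "graph V E"
    and "\<And>V' E'. subgraph V' E' V E \<Longrightarrow> real (card V') \<ge> real (card V) / 2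
           \<Longrightarrow> \<not> expander \<epsilon> V' E'"
  shows "\<exists>S. separator (2 * \<epsilon> * real (card V) / 3) (2/3) V E S"
proof (cases "card V = 0")
  case True
  have "separator (2 * \<epsilon> * real (card V) / 3) (2/3) V E {}"
    unfolding separator_def using True assms(2) unfolding graph_def
    by (intro exI[of _ "{}"]) auto
  then show ?thesis by blast
next
  case False
  show ?thesis
    by (rule main[OF assms, of "{}" "{}"]) (use False in auto)
qed

end
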